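(* Let $G$ be a finite abelian group of order $n$, let $S$ be the set of bijections $\{1,\dots,n\}\to G$, let $d\ge1$, and let $\pi\in S$. Then the transversals of the Latin cube $L^d(G,\pi)$ are in bijection with the solutions of \[ \pi_1+\cdots+\pi_d=\pi\qquad(\pi_1,\dots,\pi_d\in S). \] In particular, if $T(L^d(G,\pi))$ denotes the number of transversals of $L^d(G,\pi)$, then $T(L^d(G,\pi))\cdot n!$ equals the number of solutions of \[ \pi_1+\cdots+\pi_d=\pi_{d+1}\qquad(\pi_1,\dots,\pi_{d+1}\in S). \]
   Context: Sums of functions $\{1,\dots,n\}\to G$ are pointwise. A Latin cube of dimension $d$ and order $n$ is a $d$-dimensional array indexed by $\{1,\dots,n\}^d$ with entries (symbols) in $\{1,\dots,n\}$ such that no symbol occurs more than once in any axis-parallel line. A transversal is a selection of $n$ entries such that no two lie in a common axis-parallel hyperplane (i.e. share the value of some coordinate) and no two have the same symbol. $L^d(G,\pi)$ is the Latin cube whose $(i_1,\dots,i_d)$-entry is $\pi^{-1}(\pi(i_1)+\cdots+\pi(i_d))$. *)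

theory Defs
  imports "HOL-Library.FuncSet"
begin

definition cube_cells :: "nat \<Rightarrow> nat \<Rightarrow> (nat \<Rightarrow> nat) set" where
  "cube_cells d n = {1..d} \<rightarrow>\<^sub>E {1..n}"

definition is_transversal ::
  "nat \<Rightarrow> nat \<Rightarrow> ((nat \<Rightarrow> nat) \<Rightarrow> nat) \<Rightarrow> (nat \<Rightarrow> nat) set \<Rightarrow> bool" where
  "is_transversal d n L T \<longleftrightarrow> T \<subseteq> cube_cells d n \<and> card T = n \<and>
     (\<forall>x\<in>T. \<forall>y\<in>T. x \<noteq> y \<longrightarrow> (\<forall>k\<in>{1..d}. x k \<noteq> y k) \<and> L x \<noteq> L y)"

definition transversals ::
  "nat \<Rightarrow> nat \<Rightarrow> ((nat \<Rightarrow> nat) \<Rightarrow> nat) \<Rightarrow> (nat \<Rightarrow> nat) set set" where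
  "transversals d n L = {T. is_transversal d n L T}"

definition bijections_to :: "nat \<Rightarrow> (nat \<Rightarrow> 'g) set" where
  "bijections_to n = {f. bij_betw f {1..n} (UNIV :: 'g set) \<and> f \<in> extensional {1..n}}"

definition group_cube :: "nat \<Rightarrow> nat \<Rightarrow> (nat \<Rightarrow> 'g::comm_monoid_add) \<Rightarrow> (nat \<Rightarrow> nat) \<Rightarrow> nat" where
  "group_cube d n \<pi> x = inv_into {1..n} \<pi> (\<Sum>k=1..d. \<pi> (x k))"

end

theory Submission
  imports Defs "HOL-Combinatorics.Permutations"
begin


lemma S_facts:
  assumes "\<sigma> \<in> bijections_to n"
  shows "inj_on \<sigma> {1..n}" "\<sigma> ` {1..n} = UNIV" "\<And>y. inv_into {1..n} \<sigma> y \<in> {1..n}"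
    "\<And>y. \<sigma> (inv_into {1..n} \<sigma> y) = y"
    "\<And>s. s\<in>{1..n} \<Longrightarrow> inv_into {1..n} \<sigma> (\<sigma> s) = s" "\<sigma> \<in> extensional {1..n}"
    "bij_betw \<sigma> {1..n} UNIV"
proof -
  have b: "bij_betw \<sigma> {1..n} UNIV" and e: "\<sigma> \<in> extensional {1..n}"
    using assms unfolding bijections_to_def by auto
  show "inj_on \<sigma> {1..n}" "\<sigma> ` {1..n} = UNIV" "\<sigma> \<in> extensional {1..n}" "bij_betw \<sigma> {1..n} UNIV"
    using b e by (auto simp: bij_betw_def)
  show "\<And>y. inv_into {1..n} \<sigma> y \<in> {1..n}"
    by (rule inv_into_into) (use b in \<open>auto simp: bij_betw_def\<close>)
  show "\<And>y. \<sigma> (inv_into {1..n} \<sigma> y) = y"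
    by (rule f_inv_into_f) (use b in \<open>auto simp: bij_betw_def\<close>)
  show "\<And>s. s\<in>{1..n} \<Longrightarrow> inv_into {1..n} \<sigma> (\<sigma> s) = s"
    by (rule inv_into_f_f) (use b in \<open>auto simp: bij_betw_def\<close>)
qed

lemma finite_S: "finite (bijections_to n :: (nat \<Rightarrow> 'g::finite) set)"
proof -
  have "bijections_to n \<subseteq> ({1..n} \<rightarrow>\<^sub>E (UNIV :: 'g set))"
    unfolding bijections_to_def by (auto simp: PiE_def)
  moreover have "finite ({1..n} \<rightarrow>\<^sub>E (UNIV :: 'g set))" by (simp add: finite_PiE)
  ultimately show ?thesis by (rule finite_subset)
qed

lemma card_S:
  fixes \<pi> :: "nat \<Rightarrow> 'g::finite"
  assumes pi: "\<pi> \<in> bijections_to n"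
  shows "card (bijections_to n :: (nat \<Rightarrow> 'g) set) = fact n"
proof -
  note P = S_facts[OF pi]
  note Ps = P[simplified]
  define F where "F = (\<lambda>\<sigma>::nat\<Rightarrow>'g. \<lambda>i. if i \<in> {1..n} then inv_into {1..n} \<pi> (\<sigma> i) else i)"
  define G where "G = (\<lambda>\<rho>. restrict (\<lambda>i. \<pi> (\<rho> i)) {1..n})"
  define S where "S = (bijections_to n :: (nat \<Rightarrow> 'g) set)"
  have "bij_betw F S {p. p permutes {1..n}}"
  proof (rule bij_betw_byWitness[where f'=G])
    show "\<forall>a\<in>S. G (F a) = a"
    proof
      fix a assume a: "a \<in> S"
      note A = S_facts[OF a[unfolded S_def]]
      show "G (F a) = a"
        using A(6) P(4) by (auto simp: G_def F_def fun_eq_iff extensional_def)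
    qed
    show "\<forall>a'\<in>{p. p permutes {1..n}}. F (G a') = a'"
    proof
      fix a' assume "a' \<in> {p. p permutes {1..n}}"
      then have a': "a' permutes {1..n}" by simp
      show "F (G a') = a'"
        using P(5) permutes_in_image[OF a'] permutes_not_in[OF a']
        by (auto simp: G_def F_def fun_eq_iff)
    qed
    show "F ` S \<subseteq> {p. p permutes {1..n}}"
    proof
      fix x assume "x \<in> F ` S"
      then obtain a where a: "a \<in> S" and x: "x = F a" by auto
      note A = S_facts[OF a[unfolded S_def]]
      have "bij_betw (inv_into {1..n} \<pi> \<circ> a) {1..n} {1..n}"
        using A(7) bij_betw_inv_into[OF P(7)] by (rule bij_betw_trans)
      then have "bij_betw x {1..n} {1..n}"
        by (rule bij_betw_cong[THEN iffD1, rotated]) (auto simp: x F_def)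
      then show "x \<in> {p. p permutes {1..n}}"
        by (auto intro!: bij_imp_permutes simp: x F_def)
    qed
    show "G ` {p. p permutes {1..n}} \<subseteq> S"
    proof
      fix x assume "x \<in> G ` {p. p permutes {1..n}}"
      then obtain a where a: "a permutes {1..n}" and x: "x = G a" by auto
      have "bij_betw (\<pi> \<circ> a) {1..n} UNIV"
        using permutes_imp_bij[OF a] P(7) by (rule bij_betw_trans)
      then show "x \<in> S"
        unfolding S_def bijections_to_def x G_def by (auto simp: comp_def)
    qed
  qed
  then have "card S = card {p. p permutes {1..n}}"
    by (rule bij_betw_same_card)
  also have "\<dots> = fact n" by (rule card_permutations) auto
  finally show ?thesis unfolding S_def .
qed

lemma part1:
  fixes \<pi> :: "nat \<Rightarrow> 'g::{ab_group_add, finite}"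
    and d :: nat
  assumes n: "n = card (UNIV::'g set)" and pi: "\<pi> \<in> bijections_to n"
  defines "Sol \<equiv> {p \<in> {1..d} \<rightarrow>\<^sub>E bijections_to n. \<forall>i\<in>{1..n}. (\<Sum>k=1..d. p k i) = \<pi> i}"
  defines "g \<equiv> \<lambda>p. (\<lambda>s. restrict (\<lambda>k. inv_into {1..n} \<pi> (p k s)) {1..d}) ` {1..n}"
  shows "bij_betw g Sol (transversals d n (group_cube d n \<pi>))"
proof -
  note P = S_facts[OF pi]
  note Ps = P[simplified]
  define L where "L = group_cube d n \<pi>"
  define x where "x = (\<lambda>(p::nat\<Rightarrow>nat\<Rightarrow>'g) (s::nat). restrict (\<lambda>k. inv_into {1..n} \<pi> (p k s)) {1..d})"
  have gx: "g p = x p ` {1..n}" for p unfolding g_def x_def by simp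
  have Lin: "L y \<in> {1..n}" for y unfolding L_def group_cube_def by (rule P(3))
  have Lx: "L (x p s) = s" if p: "p \<in> Sol" and s: "s \<in> {1..n}" for p s
  proof -
    have "(\<Sum>k=1..d. \<pi> (x p s k)) = (\<Sum>k=1..d. p k s)"
      by (rule sum.cong) (auto simp: x_def P Ps)
    also have "\<dots> = \<pi> s" using p s unfolding Sol_def by auto
    finally show ?thesis unfolding L_def group_cube_def using P(5)[OF s] by simp
  qed
  have pkS: "p k \<in> bijections_to n" if "p \<in> Sol" "k \<in> {1..d}" for p k
    using that unfolding Sol_def by auto
  have inj: "inj_on g Sol"
  proof
    fix p q assume p: "p \<in> Sol" and q: "q \<in> Sol" and eq: "g p = g q"
    show "p = q"
    proof
      fix k show "p k = q k"
      proof (cases "k \<in> {1..d}")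
        case False then show ?thesis using p q unfolding Sol_def by (auto simp: PiE_def extensional_def)
      next
        case k: True
        show ?thesis
        proof
          fix s show "p k s = q k s"
          proof (cases "s \<in> {1..n}")
            case False then show ?thesis using S_facts(6)[OF pkS[OF p k]] S_facts(6)[OF pkS[OF q k]]
              by (auto simp: extensional_def)
          next
            case s: True
            have "x p s \<in> g q" using eq s gx by auto
            then obtain t where t: "t \<in> {1..n}" and xt: "x p s = x q t" using gx by auto
            have "s = t" using Lx[OF p s] Lx[OF q t] xt by simp
            then have "inv_into {1..n} \<pi> (p k s) = inv_into {1..n} \<pi> (q k s)"
              using fun_cong[OF xt, of k] k unfolding x_def by simp
            then have "\<pi> (inv_into {1..n} \<pi> (p k s)) = \<pi> (inv_into {1..n} \<pi> (q k s))" by simp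
            then show ?thesis using P(4) by simp
          qed
        qed
      qed
    qed
  qed
  have into: "g p \<in> transversals d n L" if p: "p \<in> Sol" for p
  proof -
    have sub: "g p \<subseteq> cube_cells d n"
      unfolding gx cube_cells_def x_def using P(3) by auto
    have injx: "inj_on (x p) {1..n}"
      by (rule inj_onI) (metis Lx[OF p])
    have card: "card (g p) = n" unfolding gx using card_image[OF injx] by simp
    have dist: "(\<forall>k\<in>{1..d}. y k \<noteq> z k) \<and> L y \<noteq> L z" if y: "y \<in> g p" and z: "z \<in> g p" and yz: "y \<noteq> z" for y z
    proof -
      obtain s t where s: "s \<in> {1..n}" and t: "t \<in> {1..n}" and ys: "y = x p s" and zt: "z = x p t"
        using y z gx by auto
      have st: "s \<noteq> t" using yz ys zt by auto
      have "y k \<noteq> z k" if k: "k \<in> {1..d}" for k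
      proof
        assume "y k = z k"
        then have "inv_into {1..n} \<pi> (p k s) = inv_into {1..n} \<pi> (q k t)" if "q = p" for q
          using k ys zt that unfolding x_def by simp
        then have "\<pi> (inv_into {1..n} \<pi> (p k s)) = \<pi> (inv_into {1..n} \<pi> (p k t))" by simp
        then have "p k s = p k t" using P(4) by simp
        then show False using S_facts(1)[OF pkS[OF p k]] s t st by (auto dest: inj_onD)
      qed
      moreover have "L y \<noteq> L z" using Lx[OF p s] Lx[OF p t] ys zt st by simp
      ultimately show ?thesis by blast
    qed
    show ?thesis unfolding transversals_def is_transversal_def L_def[symmetric]
      using sub card dist by blast
  qed
  have onto: "T \<in> g ` Sol" if T: "T \<in> transversals d n L" for T
  proof -
    have Tsub: "T \<subseteq> cube_cells d n" and cT: "card T = n"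
      and Td: "\<And>y z. y \<in> T \<Longrightarrow> z \<in> T \<Longrightarrow> y \<noteq> z \<Longrightarrow> (\<forall>k\<in>{1..d}. y k \<noteq> z k) \<and> L y \<noteq> L z"
      using T unfolding transversals_def is_transversal_def by auto
    have injL: "inj_on L T" using Td by (meson inj_onI)
    have "L ` T = {1..n}"
      by (rule card_subset_eq) (use Lin card_image[OF injL] cT in auto)
    then have bL: "bij_betw L T {1..n}" using injL by (simp add: bij_betw_def)
    define c where "c = inv_into T L"
    have bc: "bij_betw c {1..n} T" unfolding c_def by (rule bij_betw_inv_into[OF bL])
    have cT': "c s \<in> T" if "s \<in> {1..n}" for s using bc that by (auto simp: bij_betw_def)
    have Lc: "L (c s) = s" if "s \<in> {1..n}" for s
      unfolding c_def using bL that by (simp add: bij_betw_inv_into_right)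
    define p where "p = restrict (\<lambda>k. restrict (\<lambda>s. \<pi> (c s k)) {1..n}) {1..d}"
    have ccell: "c s \<in> {1..d} \<rightarrow>\<^sub>E {1..n}" if "s \<in> {1..n}" for s
      using Tsub cT'[OF that] unfolding cube_cells_def by auto
    have pk: "p k \<in> bijections_to n" if k: "k \<in> {1..d}" for k
    proof -
      have inj: "inj_on (\<lambda>s. \<pi> (c s k)) {1..n}"
      proof (rule inj_onI)
        fix s t assume s: "s \<in> {1..n}" and t: "t \<in> {1..n}" and e: "\<pi> (c s k) = \<pi> (c t k)"
        have m1: "c s k \<in> {1..n}" using ccell[OF s] k by (auto simp: PiE_def Pi_def)
        have m2: "c t k \<in> {1..n}" using ccell[OF t] k by (auto simp: PiE_def Pi_def)
        have ck: "c s k = c t k" using inj_onD[OF P(1) e m1 m2] .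
        have "c s = c t"
        proof (rule ccontr)
          assume "c s \<noteq> c t"
          then have "\<forall>k\<in>{1..d}. c s k \<noteq> c t k" using Td[OF cT'[OF s] cT'[OF t]] by simp
          then show False using ck k by simp
        qed
        then have "L (c s) = L (c t)" by (rule arg_cong)
        then show "s = t" unfolding Lc[OF s] Lc[OF t] .
      qed
      have "(\<lambda>s. \<pi> (c s k)) ` {1..n} = UNIV"
        by (rule card_subset_eq) (use card_image[OF inj] n in auto)
      then show ?thesis using inj k unfolding bijections_to_def p_def bij_betw_def by auto
    qed
    have pSol: "p \<in> Sol"
    proof -
      have "(\<Sum>k=1..d. p k s) = \<pi> s" if s: "s \<in> {1..n}" for s
      proof -
        have "(\<Sum>k=1..d. p k s) = (\<Sum>k=1..d. \<pi> (c s k))"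
          using s by (intro sum.cong) (auto simp: p_def)
        also have "\<dots> = \<pi> (L (c s))"
          unfolding L_def group_cube_def by (rule P(4)[symmetric])
        finally show ?thesis using Lc[OF s] by simp
      qed
      moreover have "p \<in> {1..d} \<rightarrow>\<^sub>E bijections_to n" using pk by (auto simp: p_def)
      ultimately show ?thesis unfolding Sol_def by auto
    qed
    have "x p s = c s" if s: "s \<in> {1..n}" for s
    proof
      fix k show "x p s k = c s k"
      proof (cases "k \<in> {1..d}")
        case True
        then have "c s k \<in> {1..n}" using ccell[OF s] by (auto simp: PiE_def Pi_def)
        then have "inv_into {1..n} \<pi> (\<pi> (c s k)) = c s k" by (rule P(5))
        then show ?thesis using True s by (simp add: x_def p_def)
      next
        case False
        then show ?thesis using ccell[OF s] by (auto simp: x_def PiE_def extensional_def)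
      qed
    qed
    then have "g p = c ` {1..n}" unfolding gx by auto
    also have "\<dots> = T" using bc by (simp add: bij_betw_def)
    finally show ?thesis using pSol by blast
  qed
  show ?thesis unfolding bij_betw_def L_def[symmetric] using inj into onto by blast
qed

lemma sol_le:
  fixes \<sigma> \<sigma>' :: "nat \<Rightarrow> 'g::{ab_group_add, finite}" and d n :: nat
  assumes a: "\<sigma> \<in> bijections_to n" and b: "\<sigma>' \<in> bijections_to n"
  shows "card {p \<in> {1..d} \<rightarrow>\<^sub>E bijections_to n. \<forall>i\<in>{1..n}. (\<Sum>k=1..d. p k i) = \<sigma> i}
       \<le> card {p \<in> {1..d} \<rightarrow>\<^sub>E bijections_to n. \<forall>i\<in>{1..n}. (\<Sum>k=1..d. p k i) = \<sigma>' i}"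
    (is "card ?A \<le> card ?B")
proof -
  note A = S_facts[OF a] and B = S_facts[OF b]
  define \<tau> where "\<tau> = (\<lambda>s. inv_into {1..n} \<sigma> (\<sigma>' s))"
  have bt: "bij_betw \<tau> {1..n} {1..n}"
    unfolding \<tau>_def using bij_betw_trans[OF B(7) bij_betw_inv_into[OF A(7)]] by (simp add: comp_def)
  have tin: "\<tau> s \<in> {1..n}" for s unfolding \<tau>_def by (rule A(3))
  define h where "h = (\<lambda>p::nat\<Rightarrow>nat\<Rightarrow>'g. restrict (\<lambda>k. restrict (\<lambda>s. p k (\<tau> s)) {1..n}) {1..d})"
  have "inj_on h ?A"
  proof
    fix p q assume p: "p \<in> ?A" and q: "q \<in> ?A" and e: "h p = h q"
    show "p = q"
    proof
      fix k show "p k = q k"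
      proof (cases "k \<in> {1..d}")
        case False then show ?thesis using p q by (auto simp: PiE_def extensional_def)
      next
        case k: True
        have pk: "p k \<in> bijections_to n" "q k \<in> bijections_to n" using p q k by auto
        show ?thesis
        proof
          fix t show "p k t = q k t"
          proof (cases "t \<in> {1..n}")
            case False then show ?thesis using S_facts(6)[OF pk(1)] S_facts(6)[OF pk(2)]
              by (auto simp: extensional_def)
          next
            case t: True
            have "t \<in> \<tau> ` {1..n}" using t bt by (simp add: bij_betw_def)
            then obtain s where s: "s \<in> {1..n}" and ts: "t = \<tau> s" by blast
            have "h p k s = h q k s" using e by simp
            then show ?thesis using k s ts by (simp add: h_def)
          qed
        qed
      qed
    qed
  qed
  moreover have "h ` ?A \<subseteq> ?B"
  proof
    fix y assume "y \<in> h ` ?A"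
    then obtain p where p: "p \<in> ?A" and y: "y = h p" by auto
    have "y k \<in> bijections_to n" if k: "k \<in> {1..d}" for k
    proof -
      have pk: "bij_betw (p k) {1..n} UNIV" using p k S_facts(7) by blast
      have "bij_betw (p k \<circ> \<tau>) {1..n} UNIV" using bt pk by (rule bij_betw_trans)
      then show ?thesis using k unfolding y h_def bijections_to_def by (simp add: comp_def)
    qed
    moreover have "(\<Sum>k=1..d. y k i) = \<sigma>' i" if i: "i \<in> {1..n}" for i
    proof -
      have "(\<Sum>k=1..d. y k i) = (\<Sum>k=1..d. p k (\<tau> i))"
        using i by (intro sum.cong) (auto simp: y h_def)
      also have "\<dots> = \<sigma> (\<tau> i)" using p tin by auto
      also have "\<dots> = \<sigma>' i" unfolding \<tau>_def by (rule A(4))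
      finally show ?thesis .
    qed
    moreover have "y \<in> extensional {1..d}" unfolding y h_def by simp
    ultimately show "y \<in> ?B" by (simp add: PiE_def Pi_def)
  qed
  moreover have "finite ?B"
    by (rule finite_subset[of _ "{1..d} \<rightarrow>\<^sub>E bijections_to n"]) (auto intro: finite_PiE finite_S)
  ultimately show ?thesis by (rule card_inj_on_le)
qed

theorem lemma7p1:
  fixes \<pi> :: "nat \<Rightarrow> 'g::{ab_group_add, finite}"
    and n d :: nat
  assumes "n = card (UNIV :: 'g set)"
    and "d \<ge> 1"
    and "\<pi> \<in> bijections_to n"
  shows "(\<exists>f. bij_betw f (transversals d n (group_cube d n \<pi>))
             {p \<in> {1..d} \<rightarrow>\<^sub>E bijections_to n. \<forall>i\<in>{1..n}. (\<Sum>k=1..d. p k i) = \<pi> i})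
       \<and> card (transversals d n (group_cube d n \<pi>)) * fact n =
         card {p \<in> {1..d+1} \<rightarrow>\<^sub>E (bijections_to n :: (nat \<Rightarrow> 'g) set).
                 \<forall>i\<in>{1..n}. (\<Sum>k=1..d. p k i) = p (d+1) i}"
proof -
  define S where "S = (bijections_to n :: (nat \<Rightarrow> 'g) set)"
  define Sol where "Sol = (\<lambda>\<sigma>::nat\<Rightarrow>'g. {p \<in> {1..d} \<rightarrow>\<^sub>E S. \<forall>i\<in>{1..n}. (\<Sum>k=1..d. p k i) = \<sigma> i})"
  define T where "T = transversals d n (group_cube d n \<pi>)"
  have bg: "bij_betw (\<lambda>p. (\<lambda>s. restrict (\<lambda>k. inv_into {1..n} \<pi> (p k s)) {1..d}) ` {1..n}) (Sol \<pi>) T"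
    unfolding Sol_def S_def T_def by (rule part1[OF assms(1) assms(3)])
  have partA: "\<exists>f. bij_betw f T (Sol \<pi>)"
    using bij_betw_inv_into[OF bg] by blast
  have cT: "card T = card (Sol \<pi>)" using bij_betw_same_card[OF bg] by simp
  have eqc: "card (Sol \<sigma>) = card (Sol \<pi>)" if "\<sigma> \<in> S" for \<sigma>
    using sol_le[OF that[unfolded S_def] assms(3), of d] sol_le[OF assms(3) that[unfolded S_def], of d]
    unfolding Sol_def S_def by simp
  define B where "B = {p \<in> {1..d+1} \<rightarrow>\<^sub>E S. \<forall>i\<in>{1..n}. (\<Sum>k=1..d. p k i) = p (d+1) i}"
  define \<Phi> where "\<Phi> = (\<lambda>p::nat\<Rightarrow>nat\<Rightarrow>'g. (p (d+1), restrict p {1..d}))"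
  define \<Psi> where "\<Psi> = (\<lambda>(\<sigma>::nat\<Rightarrow>'g, q::nat\<Rightarrow>nat\<Rightarrow>'g). q(d+1 := \<sigma>))"
  have "bij_betw \<Phi> B (SIGMA \<sigma>:S. Sol \<sigma>)"
  proof (rule bij_betw_byWitness[where f'=\<Psi>])
    show "\<forall>a\<in>B. \<Psi> (\<Phi> a) = a"
      by (auto simp: B_def \<Phi>_def \<Psi>_def fun_eq_iff PiE_def extensional_def)
    show "\<forall>a'\<in>(SIGMA \<sigma>:S. Sol \<sigma>). \<Phi> (\<Psi> a') = a'"
      by (auto simp: Sol_def \<Phi>_def \<Psi>_def fun_eq_iff PiE_def extensional_def)
    show "\<Phi> ` B \<subseteq> (SIGMA \<sigma>:S. Sol \<sigma>)"
    proof
      fix y assume "y \<in> \<Phi> ` B"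
      then obtain p where p: "p \<in> B" and y: "y = \<Phi> p" by auto
      have s: "(\<Sum>k=1..d. restrict p {1..d} k i) = (\<Sum>k=1..d. p k i)" for i
        by (rule sum.cong) auto
      show "y \<in> (SIGMA \<sigma>:S. Sol \<sigma>)"
        using p unfolding y \<Phi>_def B_def Sol_def s by (auto simp: PiE_def Pi_def)
    qed
    show "\<Psi> ` (SIGMA \<sigma>:S. Sol \<sigma>) \<subseteq> B"
    proof
      fix y assume "y \<in> \<Psi> ` (SIGMA \<sigma>:S. Sol \<sigma>)"
      then obtain \<sigma> q where sq: "\<sigma> \<in> S" "q \<in> Sol \<sigma>" and y: "y = q(d+1 := \<sigma>)"
        by (auto simp: \<Psi>_def)
      have s: "(\<Sum>k=1..d. y k i) = (\<Sum>k=1..d. q k i)" for i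
        unfolding y by (rule sum.cong) auto
      show "y \<in> B"
        using sq unfolding B_def Sol_def s by (auto simp: y PiE_def Pi_def extensional_def)
    qed
  qed
  then have "card B = card (SIGMA \<sigma>:S. Sol \<sigma>)" by (rule bij_betw_same_card)
  also have "\<dots> = (\<Sum>\<sigma>\<in>S. card (Sol \<sigma>))"
  proof (rule card_SigmaI)
    show "finite S" unfolding S_def by (rule finite_S)
    show "\<forall>a\<in>S. finite (Sol a)"
    proof
      fix a show "finite (Sol a)" unfolding Sol_def
        by (rule finite_subset[of _ "{1..d} \<rightarrow>\<^sub>E S"]) (auto intro: finite_PiE simp: S_def finite_S)
    qed
  qed
  also have "\<dots> = (\<Sum>\<sigma>\<in>S. card (Sol \<pi>))" by (rule sum.cong) (auto simp: eqc)
  also have "\<dots> = card S * card (Sol \<pi>)" by simp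
  also have "card S = fact n" unfolding S_def by (rule card_S[OF assms(3)])
  finally have "card B = fact n * card T" using cT by simp
  then show ?thesis using partA unfolding T_def B_def Sol_def S_def by (simp add: mult.commute)
qed

end
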